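(* Let $(X,f)$ be a dynamical system and $\mathcal{F}$ a Furstenberg family. The following are equivalent: (1) $(X,f)$ is transitive and $\mathcal{F}$-central; (2) $(X,f)$ is $\nabla(\mathcal{F})$-point transitive; (3) $Trans_{\nabla(\mathcal{F})}(X,f)=Trans(X,f)\neq\emptyset$.
   Context: A dynamical system is a pair $(X,f)$ with $X$ a compact metric space and $f:X\to X$ continuous. $\mathbb{N}=\{1,2,\dots\}$. For $U,V\subset X$ and $x\in X$: $N(U,V)=\{n\in\mathbb{N}: U\cap f^{-n}(V)\neq\emptyset\}$ and $N(x,U)=\{n\in\mathbb{N}: f^n(x)\in U\}$. $(X,f)$ is transitive if $N(U,V)\ne\emptyset$ for all non-empty open $U,V$. A point $x$ is a transitive point if its $\omega$-limit set $\omega(x,f)$ equals $X$; $Trans(X,f)$ denotes the set of transitive points. A Furstenberg family is a collection $\mathcal{F}$ of subsets of $\mathbb{N}$ such that $F_1\subset F_2$ and $F_1\in\mathcal{F}$ imply $F_2\in\mathcal{F}$. A point $x$ is an $\mathcal{F}$-transitive point if $N(x,U)\in\mathcal{F}$ for every non-empty open $U\subset X$; $Trans_{\mathcal{F}}(X,f)$ is the set of such points; $(X,f)$ is $\mathcal{F}$-point transitive if this set is non-empty. $(X,f)$ is $\mathcal{F}$-central if $N(U,U)\in\mathcal{F}$ for every non-empty open $U$. For $F\subset\mathbb{N}$, $F-F=\{a-b: a,b\in F,\ a>b\}$, and the reverse difference family is $\nabla(\mathcal{F})=\{F\subset\mathbb{N}: F-F\in\mathcal{F}\}$. *)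

theory Defs
  imports "HOL-Analysis.Analysis"
begin

definition dyn_sys :: "'a::metric_space set \<Rightarrow> ('a \<Rightarrow> 'a) \<Rightarrow> bool" where
  "dyn_sys X f \<longleftrightarrow> compact X \<and> X \<noteq> {} \<and> continuous_on X f \<and> f ` X \<subseteq> X"

definition posnat :: "nat set" where
  "posnat = {n. 1 \<le> n}"

definition hitting_sets :: "('a \<Rightarrow> 'a) \<Rightarrow> 'a set \<Rightarrow> 'a set \<Rightarrow> nat set" where
  "hitting_sets f U V = {n \<in> posnat. U \<inter> ((f ^^ n) -` V) \<noteq> {}}"

definition visit_times :: "('a \<Rightarrow> 'a) \<Rightarrow> 'a \<Rightarrow> 'a set \<Rightarrow> nat set" where
  "visit_times f x U = {n \<in> posnat. (f ^^ n) x \<in> U}"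

definition transitive_sys :: "'a::metric_space set \<Rightarrow> ('a \<Rightarrow> 'a) \<Rightarrow> bool" where
  "transitive_sys X f \<longleftrightarrow>
     (\<forall>U V. openin (top_of_set X) U \<and> U \<noteq> {} \<and> openin (top_of_set X) V \<and> V \<noteq> {}
        \<longrightarrow> hitting_sets f U V \<noteq> {})"

definition omega_limit :: "('a::metric_space \<Rightarrow> 'a) \<Rightarrow> 'a \<Rightarrow> 'a set" where
  "omega_limit f x = {y. \<exists>r. strict_mono r \<and> ((\<lambda>k. (f ^^ r k) x) \<longlonglongrightarrow> y)}"

definition Trans :: "'a::metric_space set \<Rightarrow> ('a \<Rightarrow> 'a) \<Rightarrow> 'a set" where
  "Trans X f = {x \<in> X. omega_limit f x = X}"

definition furstenberg_family :: "nat set set \<Rightarrow> bool" where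
  "furstenberg_family \<F> \<longleftrightarrow> \<F> \<subseteq> Pow posnat \<and>
     (\<forall>A B. A \<subseteq> B \<and> B \<subseteq> posnat \<and> A \<in> \<F> \<longrightarrow> B \<in> \<F>)"

definition Trans_fam :: "nat set set \<Rightarrow> 'a::metric_space set \<Rightarrow> ('a \<Rightarrow> 'a) \<Rightarrow> 'a set" where
  "Trans_fam \<F> X f = {x \<in> X. \<forall>U. openin (top_of_set X) U \<and> U \<noteq> {}
        \<longrightarrow> visit_times f x U \<in> \<F>}"

definition fam_point_transitive :: "nat set set \<Rightarrow> 'a::metric_space set \<Rightarrow> ('a \<Rightarrow> 'a) \<Rightarrow> bool" where
  "fam_point_transitive \<F> X f \<longleftrightarrow> Trans_fam \<F> X f \<noteq> {}"

definition fam_central :: "nat set set \<Rightarrow> 'a::metric_space set \<Rightarrow> ('a \<Rightarrow> 'a) \<Rightarrow> bool" where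
  "fam_central \<F> X f \<longleftrightarrow>
     (\<forall>U. openin (top_of_set X) U \<and> U \<noteq> {} \<longrightarrow> hitting_sets f U U \<in> \<F>)"

definition diff_set :: "nat set \<Rightarrow> nat set" where
  "diff_set F = {a - b | a b. a \<in> F \<and> b \<in> F \<and> a > b}"

definition rev_diff :: "nat set set \<Rightarrow> nat set set" where
  "rev_diff \<F> = {F. F \<subseteq> posnat \<and> diff_set F \<in> \<F>}"

end

theory Submission
  imports Defs
begin

lemma funpow_in:
  assumes "dyn_sys X f" "x \<in> X" shows "(f ^^ n) x \<in> X"
  using assms by (induction n) (auto simp: dyn_sys_def)

lemma funpow_cont:
  assumes "dyn_sys X f" shows "continuous_on X (f ^^ n)"
proof (induction n)
  case 0 then show ?case by (simp add: continuous_on_id)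
next
  case (Suc n)
  have "continuous_on X (f \<circ> (f ^^ n))"
    apply (rule continuous_on_compose[OF Suc])
    using assms funpow_in[OF assms] by (auto simp: dyn_sys_def intro: continuous_on_subset)
  then show ?case by (simp add: comp_def)
qed

lemma preimage_open:
  assumes "dyn_sys X f" "openin (top_of_set X) U"
  shows "openin (top_of_set X) (X \<inter> (f ^^ n) -` U)"
  apply (rule continuous_openin_preimage[OF funpow_cont[OF assms(1)] _ assms(2)])
  using funpow_in[OF assms(1)] by auto

lemma large_times:
  assumes "dyn_sys X f" "transitive_sys X f"
  shows "openin (top_of_set X) U \<Longrightarrow> U \<noteq> {} \<Longrightarrow> openin (top_of_set X) V \<Longrightarrow> V \<noteq> {}
     \<Longrightarrow> \<exists>n>m. U \<inter> (f ^^ n) -` V \<noteq> {}"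
proof (induction m arbitrary: U V)
  case 0
  then have "hitting_sets f U V \<noteq> {}" using assms(2) unfolding transitive_sys_def by blast
  then obtain n where "n \<ge> 1" "U \<inter> (f ^^ n) -` V \<noteq> {}"
    unfolding hitting_sets_def posnat_def by auto
  then show ?case by (intro exI[of _ n]) auto
next
  case (Suc m)
  then have "hitting_sets f V V \<noteq> {}" using assms(2) unfolding transitive_sys_def by blast
  then obtain j where j: "j \<ge> 1" "V \<inter> (f ^^ j) -` V \<noteq> {}"
    unfolding hitting_sets_def posnat_def by auto
  define V' where "V' = V \<inter> (X \<inter> (f ^^ j) -` V)"
  have V'o: "openin (top_of_set X) V'"
    unfolding V'_def using Suc.prems preimage_open[OF assms(1)] by blast
  have "V \<subseteq> X" using Suc.prems(3) openin_imp_subset by blast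
  then have "V' \<noteq> {}" using j unfolding V'_def by blast
  then obtain n where n: "n > m" "U \<inter> (f ^^ n) -` V' \<noteq> {}"
    using Suc.IH[OF Suc.prems(1,2) V'o] by blast
  then obtain z where z: "z \<in> U" "(f ^^ n) z \<in> V'" by blast
  have "(f ^^ (j + n)) z = (f ^^ j) ((f ^^ n) z)" by (simp add: funpow_add)
  then have "(f ^^ (j + n)) z \<in> V" using z unfolding V'_def by auto
  then show ?case using z n j by (intro exI[of _ "j+n"]) auto
qed

lemma trans_char:
  assumes "dyn_sys X f"
  shows "x \<in> Trans X f \<longleftrightarrow> x \<in> X \<and>
     (\<forall>U. openin (top_of_set X) U \<and> U \<noteq> {} \<longrightarrow> (\<forall>m. \<exists>n>m. (f ^^ n) x \<in> U))"
proof
  assume x: "x \<in> Trans X f"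
  then have xX: "x \<in> X" and om: "omega_limit f x = X" unfolding Trans_def by auto
  show "x \<in> X \<and> (\<forall>U. openin (top_of_set X) U \<and> U \<noteq> {} \<longrightarrow> (\<forall>m. \<exists>n>m. (f ^^ n) x \<in> U))"
  proof (intro conjI xX allI impI)
    fix U m assume U: "openin (top_of_set X) U \<and> U \<noteq> {}"
    then obtain y where y: "y \<in> U" by blast
    from U obtain T where T: "open T" "U = T \<inter> X" by (auto simp: openin_open)
    have "y \<in> omega_limit f x" using om y U openin_imp_subset by blast
    then obtain r where r: "strict_mono r" "(\<lambda>k. (f ^^ r k) x) \<longlonglongrightarrow> y"
      unfolding omega_limit_def by blast
    have "y \<in> T" using T y by auto
    then have "eventually (\<lambda>k. (f ^^ r k) x \<in> T) sequentially"
      using r(2) T(1) topological_tendstoD by blast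
    then obtain N where N: "\<And>k. k \<ge> N \<Longrightarrow> (f ^^ r k) x \<in> T"
      unfolding eventually_sequentially by blast
    define k where "k = max N (Suc m)"
    have "r k \<ge> k" using r(1) seq_suble by blast
    then have "r k > m" unfolding k_def by simp
    moreover have "(f ^^ r k) x \<in> U" using N[of k] T funpow_in[OF assms xX] unfolding k_def by auto
    ultimately show "\<exists>n>m. (f ^^ n) x \<in> U" by blast
  qed
next
  assume H: "x \<in> X \<and> (\<forall>U. openin (top_of_set X) U \<and> U \<noteq> {} \<longrightarrow> (\<forall>m. \<exists>n>m. (f ^^ n) x \<in> U))"
  then have xX: "x \<in> X" by blast
  have clX: "closed X" using assms compact_imp_closed unfolding dyn_sys_def by blast
  have "omega_limit f x \<subseteq> X"
  proof
    fix y assume "y \<in> omega_limit f x"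
    then obtain r where r: "(\<lambda>k. (f ^^ r k) x) \<longlonglongrightarrow> y" unfolding omega_limit_def by blast
    show "y \<in> X"
      using closed_sequentially[OF clX _ r] funpow_in[OF assms xX] by blast
  qed
  moreover have "X \<subseteq> omega_limit f x"
  proof
    fix y assume yX: "y \<in> X"
    have ex: "\<exists>n>m. dist ((f ^^ n) x) y < e" if "e > 0" for m e
    proof -
      have "openin (top_of_set X) (X \<inter> ball y e)" by (simp add: openin_open_Int)
      moreover have "y \<in> X \<inter> ball y e" using yX that by simp
      ultimately obtain n where "n > m" "(f ^^ n) x \<in> X \<inter> ball y e" using H by blast
      then show ?thesis by (auto simp: dist_commute)
    qed
    define g where "g m e = (SOME n. n > m \<and> dist ((f ^^ n) x) y < e)" for m e
    have g: "g m e > m \<and> dist ((f ^^ g m e) x) y < e" if "e > 0" for m e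
      unfolding g_def using someI_ex[OF ex[OF that]] .
    define r where "r k = rec_nat (g 0 1) (\<lambda>k rk. g rk (1 / (real k + 2))) k" for k
    have r0: "r 0 = g 0 1" and rS: "r (Suc k) = g (r k) (1 / (real k + 2))" for k
      unfolding r_def by simp_all
    have rd: "dist ((f ^^ r k) x) y < 1 / (real k + 1)" for k
    proof (cases k)
      case 0 then show ?thesis using g[of 1 0] r0 by simp
    next
      case (Suc k') then show ?thesis using g[of "1 / (real k' + 2)" "r k'"] rS[of k']
        by (simp add: add.commute)
    qed
    have "strict_mono r"
      unfolding strict_mono_Suc_iff using rS g by simp
    moreover have "(\<lambda>k. (f ^^ r k) x) \<longlonglongrightarrow> y"
    unfolding lim_sequentially
    proof (intro allI impI)
      fix e :: real assume "e > 0"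
      then obtain N :: nat where N: "1 / (real N + 1) < e"
        by (metis add.commute nat_approx_posE of_nat_Suc)
      have "dist ((f ^^ r k) x) y < e" if "k \<ge> N" for k
      proof -
        have "1 / (real k + 1) \<le> 1 / (real N + 1)"
          using that by (simp add: frac_le)
        then show ?thesis using rd[of k] N by simp
      qed
      then show "\<exists>N. \<forall>n\<ge>N. dist ((f ^^ r n) x) y < e" by blast
    qed
    ultimately show "y \<in> omega_limit f x" unfolding omega_limit_def by blast
  qed
  ultimately show "x \<in> Trans X f" unfolding Trans_def using xX by auto
qed


lemma funpow_split:
  assumes "m \<le> n" shows "(f ^^ n) x = (f ^^ (n - m)) ((f ^^ m) x)"
proof -
  have "(f ^^ ((n - m) + m)) x = (f ^^ (n - m)) ((f ^^ m) x)" by (simp only: funpow_add comp_apply)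
  then show ?thesis using assms by simp
qed

lemma periodic_visits:
  fixes f :: "'a \<Rightarrow> 'a"
  assumes "(f ^^ a) x = p" "(f ^^ b) x = p" "a > b"
  shows "(f ^^ (b + k * (a - b))) x = p"
proof (induction k)
  case 0 then show ?case using assms by simp
next
  case (Suc k)
  have "(f ^^ (a - b)) p = p"
    using assms funpow_split[of b a f x] by simp
  have "(f ^^ (b + Suc k * (a - b))) x = (f ^^ (a - b)) ((f ^^ (b + k * (a - b))) x)"
  proof -
    have "b + Suc k * (a - b) = (a - b) + (b + k * (a - b))" by simp
    then show ?thesis by (simp only: funpow_add comp_apply)
  qed
  then show ?case using Suc \<open>(f ^^ (a - b)) p = p\<close> by simp
qed

lemma visit_two:
  assumes "visit_times f x U \<in> rev_diff \<F>" "{} \<notin> \<F>"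
  shows "\<exists>a b. a > b \<and> b \<ge> 1 \<and> (f ^^ a) x \<in> U \<and> (f ^^ b) x \<in> U"
proof -
  have "diff_set (visit_times f x U) \<noteq> {}" using assms unfolding rev_diff_def by auto
  then show ?thesis unfolding diff_set_def visit_times_def posnat_def by blast
qed

lemma transfam_sub_trans:
  assumes ds: "dyn_sys X f" and e: "{} \<notin> \<F>"
  shows "Trans_fam (rev_diff \<F>) X f \<subseteq> Trans X f"
proof
  fix x assume x: "x \<in> Trans_fam (rev_diff \<F>) X f"
  then have xX: "x \<in> X" and V: "\<And>U. openin (top_of_set X) U \<Longrightarrow> U \<noteq> {} \<Longrightarrow> visit_times f x U \<in> rev_diff \<F>"
    unfolding Trans_fam_def by auto
  have "\<exists>n>m. (f ^^ n) x \<in> U" if U: "openin (top_of_set X) U" "U \<noteq> {}" for U m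
  proof -
    define Orb where "Orb = (\<lambda>j. (f ^^ j) x) ` {..m}"
    have Ofin: "finite Orb" unfolding Orb_def by simp
    have OX: "Orb \<subseteq> X" unfolding Orb_def using funpow_in[OF ds xX] by auto
    have clO: "closedin (top_of_set X) Orb"
      unfolding closedin_closed
      by (rule exI[of _ Orb]) (use OX finite_imp_closed[OF Ofin] in auto)
    show ?thesis
    proof (cases "U - Orb = {}")
      case False
      have "openin (top_of_set X) (U - Orb)" using U(1) clO by (rule openin_diff)
      then obtain a b where ab: "a > b" "b \<ge> 1" "(f ^^ b) x \<in> U - Orb"
        using visit_two[OF V[OF _ False] e] by blast
      have "b > m"
      proof (rule ccontr)
        assume "\<not> b > m"
        then have "(f ^^ b) x \<in> Orb" unfolding Orb_def by auto
        then show False using ab by blast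
      qed
      then show ?thesis using ab(3) by (intro exI[of _ b]) simp
    next
      case True
      then have "U \<subseteq> Orb" by simp
      then have Ufin: "finite U" using Ofin by (rule finite_subset)
      obtain p where p: "p \<in> U" using U by blast
      have fp: "finite (U - {p})" using Ufin by simp
      have "closedin (top_of_set X) (U - {p})"
        unfolding closedin_closed
        by (rule exI[of _ "U - {p}"]) (use openin_imp_subset[OF U(1)] finite_imp_closed[OF fp] in auto)
      then have "openin (top_of_set X) (U - (U - {p}))" by (rule openin_diff[OF U(1)])
      moreover have "U - (U - {p}) = {p}" using p by blast
      ultimately have po: "openin (top_of_set X) {p}" by simp
      obtain a b where ab: "a > b" "b \<ge> 1" "(f ^^ a) x = p" "(f ^^ b) x = p"
        using visit_two[OF V[OF po] e] by blast
      have "(f ^^ (b + Suc m * (a - b))) x = p" using periodic_visits[OF ab(3,4,1)] .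
      moreover have "b + Suc m * (a - b) > m"
      proof -
        have "a - b \<ge> 1" using ab(1) by simp
        then have "Suc m * (a - b) \<ge> Suc m * 1" by (rule mult_le_mono2)
        then show ?thesis by simp
      qed
      ultimately show ?thesis using p by (intro exI[of _ "b + Suc m * (a - b)"]) simp
    qed
  qed
  then show "x \<in> Trans X f" using trans_char[OF ds] xX by blast
qed

lemma trans_sub_transfam:
  assumes ds: "dyn_sys X f" and F: "furstenberg_family \<F>" and c: "fam_central \<F> X f"
  shows "Trans X f \<subseteq> Trans_fam (rev_diff \<F>) X f"
proof
  fix x assume x: "x \<in> Trans X f"
  then have xX: "x \<in> X" and H: "\<And>U m. openin (top_of_set X) U \<Longrightarrow> U \<noteq> {} \<Longrightarrow> \<exists>n>m. (f ^^ n) x \<in> U"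
    using trans_char[OF ds] by blast+
  have "visit_times f x U \<in> rev_diff \<F>" if U: "openin (top_of_set X) U" "U \<noteq> {}" for U
  proof -
    have hs: "hitting_sets f U U \<in> \<F>" using c U unfolding fam_central_def by blast
    have sub: "hitting_sets f U U \<subseteq> diff_set (visit_times f x U)"
    proof
      fix n assume n: "n \<in> hitting_sets f U U"
      then have n1: "n \<ge> 1" and ne: "U \<inter> (f ^^ n) -` U \<noteq> {}"
        unfolding hitting_sets_def posnat_def by auto
      define W where "W = U \<inter> (X \<inter> (f ^^ n) -` U)"
      have "openin (top_of_set X) W" unfolding W_def using U preimage_open[OF ds] by blast
      moreover have "W \<noteq> {}" using ne openin_imp_subset[OF U(1)] unfolding W_def by blast
      ultimately obtain b where b: "b > 0" "(f ^^ b) x \<in> W" using H by blast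
      have "(f ^^ (n + b)) x = (f ^^ n) ((f ^^ b) x)" by (simp add: funpow_add)
      then have "(f ^^ (n + b)) x \<in> U" using b unfolding W_def by auto
      moreover have "(f ^^ b) x \<in> U" using b unfolding W_def by auto
      ultimately show "n \<in> diff_set (visit_times f x U)"
        unfolding diff_set_def visit_times_def posnat_def using b n1
        by (intro CollectI exI[of _ "n+b"] exI[of _ b]) auto
    qed
    have "diff_set (visit_times f x U) \<subseteq> posnat"
      unfolding diff_set_def posnat_def by auto
    then have "diff_set (visit_times f x U) \<in> \<F>"
      using F hs sub unfolding furstenberg_family_def by blast
    moreover have "visit_times f x U \<subseteq> posnat" unfolding visit_times_def by auto
    ultimately show ?thesis unfolding rev_diff_def by blast
  qed
  then show "x \<in> Trans_fam (rev_diff \<F>) X f" unfolding Trans_fam_def using xX by blast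
qed

lemma transfam_central:
  assumes F: "furstenberg_family \<F>" and x: "x \<in> Trans_fam (rev_diff \<F>) X f"
  shows "fam_central \<F> X f"
  unfolding fam_central_def
proof (intro allI impI)
  fix U assume U: "openin (top_of_set X) U \<and> U \<noteq> {}"
  then have d: "diff_set (visit_times f x U) \<in> \<F>"
    using x unfolding Trans_fam_def rev_diff_def by blast
  have sub: "diff_set (visit_times f x U) \<subseteq> hitting_sets f U U"
  proof
    fix n assume "n \<in> diff_set (visit_times f x U)"
    then obtain a b where ab: "n = a - b" "a > b" "(f ^^ a) x \<in> U" "(f ^^ b) x \<in> U"
      unfolding diff_set_def visit_times_def by blast
    have "(f ^^ (a - b)) ((f ^^ b) x) = (f ^^ a) x"
      using ab(2) funpow_split[of b a f x] by simp
    then have "(f ^^ b) x \<in> U \<inter> (f ^^ n) -` U" using ab by simp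
    then show "n \<in> hitting_sets f U U" unfolding hitting_sets_def posnat_def using ab by auto
  qed
  have "hitting_sets f U U \<subseteq> posnat" unfolding hitting_sets_def by auto
  then show "hitting_sets f U U \<in> \<F>" using F d sub unfolding furstenberg_family_def by blast
qed

lemma trans_transitive:
  assumes ds: "dyn_sys X f" and x: "x \<in> Trans X f"
  shows "transitive_sys X f"
  unfolding transitive_sys_def
proof (intro allI impI)
  fix U V assume UV: "openin (top_of_set X) U \<and> U \<noteq> {} \<and> openin (top_of_set X) V \<and> V \<noteq> {}"
  have H: "\<And>U m. openin (top_of_set X) U \<Longrightarrow> U \<noteq> {} \<Longrightarrow> \<exists>n>m. (f ^^ n) x \<in> U"
    using trans_char[OF ds] x by blast
  obtain b where b: "b > 0" "(f ^^ b) x \<in> U" using H UV by blast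
  obtain a where a: "a > b" "(f ^^ a) x \<in> V" using H UV by blast
  have "(f ^^ (a - b)) ((f ^^ b) x) = (f ^^ a) x"
    using a(1) funpow_split[of b a f x] by simp
  then have "(f ^^ b) x \<in> U \<inter> (f ^^ (a - b)) -` V" using a b by simp
  then have "a - b \<in> hitting_sets f U V" unfolding hitting_sets_def posnat_def using a by auto
  then show "hitting_sets f U V \<noteq> {}" by blast
qed


lemma exists_trans:
  assumes ds: "dyn_sys X f" and tr: "transitive_sys X f"
  shows "Trans X f \<noteq> {}"
proof -
  have cX: "compact X" and XnE: "X \<noteq> {}" using ds unfolding dyn_sys_def by auto
  have "\<forall>k::nat. \<exists>N. finite N \<and> X \<subseteq> (\<Union>x\<in>N. ball x (1 / (real k + 1)))"
  proof
    fix k :: nat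
    have "(1 / (real k + 1)) > 0" by simp
    then show "\<exists>N. finite N \<and> X \<subseteq> (\<Union>x\<in>N. ball x (1 / (real k + 1)))"
      using cX unfolding compact_eq_totally_bounded by blast
  qed
  then obtain N where N: "\<And>k. finite (N k)" "\<And>k. X \<subseteq> (\<Union>x\<in>N k. ball x (1 / (real k + 1)))"
    by metis
  define I where "I = {(d, k, m::nat). d \<in> N k \<and> X \<inter> ball d (1 / (real k + 1)) \<noteq> {}}"
  define g where "g = (\<lambda>(d, k, m::nat). {z \<in> X. \<exists>n>m. (f ^^ n) z \<in> ball d (1 / (real k + 1))})"
  define G where "G = g ` I"
  have "I \<subseteq> (\<Union>k. N k) \<times> UNIV" unfolding I_def by auto
  moreover have "countable ((\<Union>k. N k) \<times> (UNIV :: (nat \<times> nat) set))"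
    by (intro countable_SIGMA countable_UN) (auto intro: countable_finite N(1))
  ultimately have cI: "countable I" by (rule countable_subset)
  have cG: "countable G" unfolding G_def using cI by simp
  have Gprop: "openin (top_of_set X) T \<and> (top_of_set X) closure_of T = topspace (top_of_set X)"
    if "T \<in> G" for T
  proof -
    from that obtain d k m where dkm: "(d, k, m) \<in> I" "T = g (d, k, m)" unfolding G_def by auto
    define r where "r = 1 / (real k + 1)"
    have Tdef: "T = {z \<in> X. \<exists>n>m. (f ^^ n) z \<in> ball d r}" using dkm unfolding g_def r_def by simp
    have Vo: "openin (top_of_set X) (X \<inter> ball d r)" by (simp add: openin_open_Int)
    have Vne: "X \<inter> ball d r \<noteq> {}" using dkm unfolding I_def r_def by auto
    have Teq: "T = \<Union> ((\<lambda>n. X \<inter> (f ^^ n) -` (X \<inter> ball d r)) ` {m<..})"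
      unfolding Tdef using funpow_in[OF ds] by auto
    have "openin (top_of_set X) T"
      unfolding Teq by (rule openin_Union) (use preimage_open[OF ds Vo] in auto)
    moreover have "(top_of_set X) closure_of T = topspace (top_of_set X)"
      unfolding dense_intersects_open
    proof (intro allI impI)
      fix W assume W: "openin (top_of_set X) W \<and> W \<noteq> {}"
      then obtain n where n: "n > m" "W \<inter> (f ^^ n) -` (X \<inter> ball d r) \<noteq> {}"
        using large_times[OF ds tr _ _ Vo Vne] by blast
      then obtain z where "z \<in> W" "(f ^^ n) z \<in> ball d r" by blast
      moreover have "z \<in> X" using \<open>z \<in> W\<close> W openin_imp_subset by blast
      ultimately have "z \<in> T \<inter> W" unfolding Tdef using n(1) by blast
      then show "T \<inter> W \<noteq> {}" by blast
    qed
    ultimately show ?thesis ..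
  qed
  have lc: "locally_compact_space (top_of_set X) \<and> regular_space (top_of_set X)"
    using compact_imp_locally_compact_space[OF compact_space_subtopology[of euclidean X]] cX
      regular_space_subtopology[OF regular_space_euclidean, of X] by simp
  have "(top_of_set X) closure_of \<Inter>G = topspace (top_of_set X)"
    using Baire_category[OF disjI2[OF lc] cG Gprop] by blast
  then have "\<Inter>G \<inter> X \<noteq> {}"
    unfolding dense_intersects_open using XnE by (metis openin_topspace topspace_euclidean_subtopology)
  then obtain x where xG: "x \<in> \<Inter>G" and xX: "x \<in> X" by blast
  have "\<exists>n>m. (f ^^ n) x \<in> U" if U: "openin (top_of_set X) U" "U \<noteq> {}" for U m
  proof -
    obtain y where y: "y \<in> U" using U by blast
    from U obtain T where T: "open T" "U = T \<inter> X" by (auto simp: openin_open)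
    obtain e where e: "e > 0" "ball y e \<subseteq> T" using T y open_contains_ball by blast
    obtain k :: nat where k: "1 / (real k + 1) < e / 2"
      using e(1) by (metis add.commute half_gt_zero nat_approx_posE of_nat_Suc)
    define r where "r = 1 / (real k + 1)"
    have yX: "y \<in> X" using y T by auto
    then obtain d where d: "d \<in> N k" "y \<in> ball d r" using N(2)[of k] unfolding r_def by blast
    then have "(d, k, m) \<in> I" unfolding I_def r_def using yX by auto
    then have "x \<in> g (d, k, m)" using xG unfolding G_def by blast
    then obtain n where n: "n > m" "(f ^^ n) x \<in> ball d r" unfolding g_def r_def by auto
    have "dist y ((f ^^ n) x) \<le> dist y d + dist d ((f ^^ n) x)" by (rule dist_triangle)
    also have "\<dots> < e" using d(2) n(2) k unfolding r_def by (simp add: dist_commute)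
    finally have "(f ^^ n) x \<in> T" using e by auto
    then show ?thesis using n(1) funpow_in[OF ds xX] T(2) by blast
  qed
  then have "x \<in> Trans X f" using trans_char[OF ds] xX by blast
  then show ?thesis by blast
qed

theorem proposition3p5:
  fixes X :: "'a::metric_space set" and f :: "'a \<Rightarrow> 'a" and \<F> :: "nat set set"
  assumes "dyn_sys X f"
    and "furstenberg_family \<F>"
    and "{} \<notin> \<F>"
  shows "((transitive_sys X f \<and> fam_central \<F> X f) \<longleftrightarrow> fam_point_transitive (rev_diff \<F>) X f)
       \<and> (fam_point_transitive (rev_diff \<F>) X f \<longleftrightarrow>
            (Trans_fam (rev_diff \<F>) X f = Trans X f \<and> Trans X f \<noteq> {}))"
proof -
  have A: "fam_point_transitive (rev_diff \<F>) X f"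
    if "transitive_sys X f" "fam_central \<F> X f"
  proof -
    have "Trans X f \<noteq> {}" using exists_trans[OF assms(1) that(1)] .
    then show ?thesis unfolding fam_point_transitive_def
      using trans_sub_transfam[OF assms(1,2) that(2)] by blast
  qed
  have B: "transitive_sys X f \<and> fam_central \<F> X f \<and> Trans_fam (rev_diff \<F>) X f = Trans X f \<and> Trans X f \<noteq> {}"
    if fpt: "fam_point_transitive (rev_diff \<F>) X f"
  proof -
    obtain x where x: "x \<in> Trans_fam (rev_diff \<F>) X f" using fpt unfolding fam_point_transitive_def by blast
    have c: "fam_central \<F> X f" using transfam_central[OF assms(2) x] .
    have xt: "x \<in> Trans X f" using transfam_sub_trans[OF assms(1,3)] x by blast
    show ?thesis using c trans_transitive[OF assms(1) xt] xt
      transfam_sub_trans[OF assms(1,3)] trans_sub_transfam[OF assms(1,2) c] by blast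
  qed
  have C: "fam_point_transitive (rev_diff \<F>) X f"
    if "Trans_fam (rev_diff \<F>) X f = Trans X f \<and> Trans X f \<noteq> {}"
    using that unfolding fam_point_transitive_def by simp
  show ?thesis using A B C by blast
qed

end
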